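(* Let $\mathcal{D}$ be a finite domain of search histories with $|\mathcal{D}|\ge 2$ and $U\ge 1$. For any search log $S\in\mathcal{D}^U$, every output of Algorithm $\hat{\mathcal{A}}$ on $S$ constitutes a privacy breach according to $\epsilon$-differential privacy for every $\epsilon$: that is, for every $O$ with $\Pr[\hat{\mathcal{A}}(S)=O]>0$ there is a neighboring search log $S'$ with $\Pr[\hat{\mathcal{A}}(S)=O] > e^{\epsilon}\Pr[\hat{\mathcal{A}}(S')=O]$.
   Context: A search log is an element $S=(S_1,\dots,S_U)\in\mathcal{D}^U$, where $S_i$ is user $i$'s search history. Two search logs are neighboring if they differ in exactly one user's history. Algorithm $\hat{\mathcal{A}}$, on input $S$, samples uniformly at random an element of $\mathcal{D}\setminus\{S_1\}$ and returns it. *)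

theory Defs
  imports "HOL-Probability.Probability"
begin

text \<open>A search log over domain D with U users is a list of length U with entries in D;
  list index 0 is user 1.\<close>
definition search_log :: "'a set \<Rightarrow> nat \<Rightarrow> 'a list \<Rightarrow> bool" where
  "search_log D U S \<longleftrightarrow> length S = U \<and> set S \<subseteq> D"

definition neighboring :: "'a list \<Rightarrow> 'a list \<Rightarrow> bool" where
  "neighboring S S' \<longleftrightarrow> length S = length S' \<and>
     card {i. i < length S \<and> S ! i \<noteq> S' ! i} = 1"

definition alg_hat :: "'a set \<Rightarrow> 'a list \<Rightarrow> 'a pmf" where
  "alg_hat D S = pmf_of_set (D - {S ! 0})"

end

theory Submission
  imports Defs
begin

theorem proposition3:
  fixes D :: "'a set" and U :: nat and S :: "'a list" and \<epsilon> :: real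
  assumes "finite D" and "card D \<ge> 2" and "U \<ge> 1"
    and "search_log D U S"
  shows "\<forall>out. pmf (alg_hat D S) out > 0 \<longrightarrow>
           (\<exists>S'. search_log D U S' \<and> neighboring S S' \<and>
                 pmf (alg_hat D S) out > exp \<epsilon> * pmf (alg_hat D S') out)"
proof (intro allI impI)
  fix out assume pos: "pmf (alg_hat D S) out > 0"
  have ne: "D - {S ! 0} \<noteq> {}"
  proof
    assume "D - {S ! 0} = {}"
    then have "D \<subseteq> {S ! 0}" by blast
    then have "card D \<le> 1" using card_mono[of "{S!0}" D] by simp
    with assms(2) show False by simp
  qed
  have fin: "finite (D - {S ! 0})" using assms(1) by simp
  have outin: "out \<in> D - {S ! 0}"
    using pos ne fin by (simp add: alg_hat_def pmf_of_set split: split_indicator_asm)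
  have len: "length S = U" "set S \<subseteq> D" using assms(4) by (auto simp: search_log_def)
  define S' where "S' = S[0 := out]"
  have l0: "0 < length S" using len assms(3) by simp
  have sl: "search_log D U S'"
    using len outin by (auto simp: search_log_def S'_def dest: set_update_subset_insert[THEN subsetD])
  have "{i. i < length S \<and> S ! i \<noteq> S' ! i} = {0}"
    using l0 outin by (auto simp: S'_def nth_list_update)
  then have nb: "neighboring S S'" by (simp add: neighboring_def S'_def)
  have S'0: "S' ! 0 = out" using l0 by (simp add: S'_def)
  have z: "pmf (alg_hat D S') out = 0"
  proof -
    have "D - {S' ! 0} \<noteq> {}"
    proof
      assume "D - {S' ! 0} = {}"
      then have "D \<subseteq> {S' ! 0}" by blast
      then have "card D \<le> 1" using card_mono[of "{S'!0}" D] by simp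
      with assms(2) show False by simp
    qed
    then show ?thesis using assms(1) S'0 by (simp add: alg_hat_def pmf_of_set)
  qed
  show "\<exists>S'. search_log D U S' \<and> neighboring S S' \<and>
                 pmf (alg_hat D S) out > exp \<epsilon> * pmf (alg_hat D S') out"
    using sl nb z pos by auto
qed

end
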